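(* Let $(X_t)_{t\ge1}$ be i.i.d. random variables in $[0,1]$ with variance $\sigma^2>0$, fix $\alpha\in(0,1)$, and define $\widehat\mu_t$, $\widehat\sigma_t^2$ and $\lambda_t$ as follows: $\widehat\mu_0=1/2$ and $\widehat\sigma_0^2=1/4$, and for $t\ge1$, $\widehat\mu_t=(1/2+\sum_{i\le t}X_i)/(t+1)$, $\widehat\sigma_t^2=(1/4+\sum_{i\le t}(X_i-\widehat\mu_i)^2)/(t+1)$ and $\lambda_t=\sqrt{2\log(2/\alpha)/(\widehat\sigma_{t-1}^2\,t\log(1+t))}\wedge\frac12$. Then, almost surely, \[ \sum_{i=1}^t\lambda_i\sim2\sqrt{\frac{2\log(2/\alpha)}{\sigma^2}}\sqrt{\frac{t}{\log t}}. \]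
   Context: $f(t)\sim g(t)$ means $f(t)/g(t)\to1$ as $t\to\infty$. *)

theory Defs
  imports "HOL-Probability.Probability"
begin

definition mu_hat :: "(nat \<Rightarrow> 'a \<Rightarrow> real) \<Rightarrow> nat \<Rightarrow> 'a \<Rightarrow> real" where
  "mu_hat X t \<omega> = (if t = 0 then 1/2
     else (1/2 + (\<Sum>i=1..t. X i \<omega>)) / (real t + 1))"

definition sigma2_hat :: "(nat \<Rightarrow> 'a \<Rightarrow> real) \<Rightarrow> nat \<Rightarrow> 'a \<Rightarrow> real" where
  "sigma2_hat X t \<omega> = (if t = 0 then 1/4
     else (1/4 + (\<Sum>i=1..t. (X i \<omega> - mu_hat X i \<omega>)\<^sup>2)) / (real t + 1))"

text \<open>lambda_t, meaningful for t >= 1.\<close>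
definition lam :: "real \<Rightarrow> (nat \<Rightarrow> 'a \<Rightarrow> real) \<Rightarrow> nat \<Rightarrow> 'a \<Rightarrow> real" where
  "lam \<alpha> X t \<omega> = min (sqrt (2 * ln (2 / \<alpha>) /
       (sigma2_hat X (t - 1) \<omega> * real t * ln (1 + real t)))) (1/2)"

end

theory Submission
  imports Defs "HOL-Real_Asymp.Real_Asymp"
begin
lemma stolz:
  fixes A G :: "nat \<Rightarrow> real"
  assumes lim: "(\<lambda>n. (A (Suc n) - A n) / (G (Suc n) - G n)) \<longlonglongrightarrow> L"
    and inc: "eventually (\<lambda>n. G n < G (Suc n)) sequentially"
    and inf: "filterlim G at_top sequentially"
  shows "(\<lambda>n. A n / G n) \<longlonglongrightarrow> L"
proof (rule LIMSEQ_I)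
  fix r :: real assume r: "r > 0"
  define e where "e = r/2"
  have e: "e > 0" using r by (simp add: e_def)
  have "eventually (\<lambda>n. dist ((A (Suc n) - A n) / (G (Suc n) - G n)) L < e) sequentially"
    using tendstoD[OF lim e] .
  with inc have "eventually (\<lambda>n. G n < G (Suc n) \<and> dist ((A (Suc n) - A n) / (G (Suc n) - G n)) L < e) sequentially"
    by (rule eventually_conj)
  then obtain N where N: "\<And>n. n \<ge> N \<Longrightarrow> G n < G (Suc n) \<and> dist ((A (Suc n) - A n) / (G (Suc n) - G n)) L < e"
    unfolding eventually_sequentially by blast
  have key: "\<bar>A n - A N - L*(G n - G N)\<bar> \<le> e*(G n - G N)" if "n \<ge> N" for n
    using that
  proof (induction n rule: dec_induct)
    case base then show ?case by simp
  next
    case (step n)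
    define d where "d = G (Suc n) - G n"
    have d: "d > 0" using N[OF step(1)] by (simp add: d_def)
    have "\<bar>(A (Suc n) - A n) / d - L\<bar> < e" using N[OF step(1)] by (simp add: d_def dist_real_def)
    then have "\<bar>((A (Suc n) - A n) - L * d) / d\<bar> < e" using d by (simp add: field_simps)
    then have "\<bar>(A (Suc n) - A n) - L * d\<bar> / d < e" using d by simp
    then have h: "\<bar>(A (Suc n) - A n) - L * d\<bar> \<le> e * d" using d by (simp add: field_simps)
    have "A (Suc n) - A N - L*(G (Suc n) - G N) = (A n - A N - L*(G n - G N)) + ((A (Suc n) - A n) - L * d)"
      by (simp add: d_def algebra_simps)
    then have "\<bar>A (Suc n) - A N - L*(G (Suc n) - G N)\<bar> \<le> e*(G n - G N) + e * d"
      using step(3) h by linarith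
    then show ?case by (simp add: d_def algebra_simps)
  qed
  define C where "C = \<bar>A N - L * G N\<bar> + e * \<bar>G N\<bar>"
  have C: "C \<ge> 0" using e by (simp add: C_def)
  from inf have "eventually (\<lambda>n. G n \<ge> C / e + 1) sequentially"
    by (simp add: filterlim_at_top)
  then obtain N2 where N2: "\<And>n. n \<ge> N2 \<Longrightarrow> G n \<ge> C / e + 1"
    unfolding eventually_sequentially by blast
  show "\<exists>no. \<forall>n\<ge>no. norm (A n / G n - L) < r"
  proof (intro exI allI impI)
    fix n assume n: "n \<ge> max N N2"
    have Gn: "G n \<ge> C/e + 1" using N2 n by simp
    have Cn: "C / e \<ge> 0" using C e by simp
    have Gpos: "G n > 0" using Gn Cn by linarith
    have "C < e * G n" using Gn e by (simp add: field_simps)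
    have "A n - L * G n = (A n - A N - L*(G n - G N)) + (A N - L * G N)" by (simp add: algebra_simps)
    then have "\<bar>A n - L * G n\<bar> \<le> e*(G n - G N) + \<bar>A N - L * G N\<bar>" using key[of n] n by linarith
    also have "\<dots> \<le> e * G n + C" using e by (simp add: C_def algebra_simps abs_if mult_le_cancel_left)
    also have "\<dots> < r * G n" using \<open>C < e * G n\<close> by (simp add: e_def)
    finally have "\<bar>A n - L * G n\<bar> / G n < r" using Gpos by (simp add: field_simps)
    moreover have "A n / G n - L = (A n - L * G n) / G n" using Gpos by (simp add: field_simps)
    ultimately show "norm (A n / G n - L) < r" using Gpos by simp
  qed
qed

lemma (in prob_space) slln01:
  fixes Y :: "nat \<Rightarrow> 'a \<Rightarrow> real"
  assumes meas: "\<And>i. i \<ge> 1 \<Longrightarrow> Y i \<in> borel_measurable M"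
    and ind: "indep_vars (\<lambda>_. borel) Y {1..}"
    and dst: "\<And>i. i \<ge> 1 \<Longrightarrow> distr M borel (Y i) = distr M borel (Y 1)"
    and bnd: "\<And>i \<omega>. i \<ge> 1 \<Longrightarrow> \<omega> \<in> space M \<Longrightarrow> Y i \<omega> \<in> {0..1}"
  shows "AE \<omega> in M. (\<lambda>n. (\<Sum>i=1..n. Y i \<omega>) / real n) \<longlonglongrightarrow> expectation (Y 1)"
proof -
  define \<mu> where "\<mu> = expectation (Y 1)"
  have hoef: "prob {\<omega>\<in>space M. \<bar>(\<Sum>i\<in>{1..n}. Y i \<omega>) / real n - \<mu>\<bar> \<ge> \<epsilon>} \<le> 2 * exp (-2 * real n * \<epsilon>\<^sup>2)"
    if n: "n \<ge> 1" and \<epsilon>: "\<epsilon> \<ge> 0" for n \<epsilon>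
  proof -
    have iid: "iid_interval_bounded_random_variables M {1..n} Y (Y 1) 0 1"
    proof (rule iid_interval_bounded_random_variables.intro[OF prob_space_axioms iid_interval_bounded_random_variables_axioms.intro])
      show "finite {1..n}" by simp
      show "indep_vars (\<lambda>_. borel) Y {1..n}"
        by (rule indep_vars_subset[OF ind]) auto
      show "distr M borel (Y i) = distr M borel (Y 1)" if "i \<in> {1..n}" for i
        using that by (intro dst) auto
      show "random_variable borel (Y 1)" using meas by simp
      show "AE x in M. Y 1 x \<in> {0..1}" using bnd by (intro AE_I2) auto
    qed
    interpret H: Hoeffding_ineq_iid M "{1..n}" Y "Y 1" 0 1 \<mu>
      unfolding Hoeffding_ineq_iid_def \<mu>_def by (rule iid)
    have "{1..n} \<noteq> {}" using n by simp
    from H.Hoeffding_ineq_abs_ge'[OF \<epsilon> _ this] show ?thesis by simp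
  qed
  have ev: "AE \<omega> in M. eventually (\<lambda>n. \<bar>(\<Sum>i=1..n. Y i \<omega>) / real n - \<mu>\<bar> < \<epsilon>) sequentially"
    if \<epsilon>: "\<epsilon> > 0" for \<epsilon>
  proof -
    define A where "A n = {\<omega>\<in>space M. \<bar>(\<Sum>i\<in>{1..Suc n}. Y i \<omega>) / real (Suc n) - \<mu>\<bar> \<ge> \<epsilon>}" for n
    have Am: "A n \<in> sets M" for n
    proof -
      have fm: "(\<lambda>\<omega>. \<bar>(\<Sum>i\<in>{1..Suc n}. Y i \<omega>) / real (Suc n) - \<mu>\<bar>) \<in> borel_measurable M"
        using meas by (intro borel_measurable_abs borel_measurable_diff borel_measurable_divide borel_measurable_sum) auto
      have "A n = (\<lambda>\<omega>. \<bar>(\<Sum>i\<in>{1..Suc n}. Y i \<omega>) / real (Suc n) - \<mu>\<bar>) -` {\<epsilon>..} \<inter> space M"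
        unfolding A_def by auto
      also have "\<dots> \<in> sets M" by (rule measurable_sets[OF fm]) (simp add: borel_closed)
      finally show ?thesis .
    qed
    have summ: "summable (\<lambda>n. measure M (A n))"
    proof (rule summable_comparison_test)
      show "summable (\<lambda>n. 2 * exp (-2 * \<epsilon>\<^sup>2) * exp (-2 * \<epsilon>\<^sup>2) ^ n)"
        by (intro summable_mult summable_geometric) (use \<epsilon> in auto)
      show "\<exists>N. \<forall>n\<ge>N. norm (measure M (A n)) \<le> 2 * exp (-2 * \<epsilon>\<^sup>2) * exp (-2 * \<epsilon>\<^sup>2) ^ n"
      proof (intro exI allI impI)
        fix n :: nat
        have "measure M (A n) \<le> 2 * exp (-2 * real (Suc n) * \<epsilon>\<^sup>2)"
          unfolding A_def using hoef[of "Suc n" \<epsilon>] \<epsilon> by simp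
        also have "exp (-2 * real (Suc n) * \<epsilon>\<^sup>2) = exp (-2 * \<epsilon>\<^sup>2) * exp (-2 * \<epsilon>\<^sup>2) ^ n"
        proof -
          have "exp (-2 * real (Suc n) * \<epsilon>\<^sup>2) = exp (real (Suc n) * (-2 * \<epsilon>\<^sup>2))" by (simp add: algebra_simps)
          also have "\<dots> = exp (-2 * \<epsilon>\<^sup>2) ^ Suc n" by (rule exp_of_nat_mult)
          finally show ?thesis by simp
        qed
        finally show "norm (measure M (A n)) \<le> 2 * exp (-2 * \<epsilon>\<^sup>2) * exp (-2 * \<epsilon>\<^sup>2) ^ n" by simp
      qed
    qed
    have fin: "\<And>n. emeasure M (A n) < \<infinity>" by (simp add: less_top[symmetric])
    have "AE \<omega> in M. eventually (\<lambda>n. \<omega> \<in> space M - A n) sequentially"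
      by (rule borel_cantelli_AE1[OF Am fin summ])
    then show ?thesis
    proof (rule AE_mp, intro AE_I2 impI)
      fix \<omega> assume "\<omega> \<in> space M" and evA: "eventually (\<lambda>n. \<omega> \<in> space M - A n) sequentially"
      from evA have "eventually (\<lambda>n. \<bar>(\<Sum>i=1..Suc n. Y i \<omega>) / real (Suc n) - \<mu>\<bar> < \<epsilon>) sequentially"
        by (rule eventually_mono) (auto simp: A_def)
      then show "eventually (\<lambda>n. \<bar>(\<Sum>i=1..n. Y i \<omega>) / real n - \<mu>\<bar> < \<epsilon>) sequentially"
        by (subst eventually_sequentially_Suc[symmetric])
    qed
  qed
  have "AE \<omega> in M. \<forall>k::nat. eventually (\<lambda>n. \<bar>(\<Sum>i=1..n. Y i \<omega>) / real n - \<mu>\<bar> < inverse (real (Suc k))) sequentially"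
    unfolding AE_all_countable by (intro allI ev) simp
  then show ?thesis
  proof (rule AE_mp, intro AE_I2 impI)
    fix \<omega> assume H: "\<forall>k::nat. eventually (\<lambda>n. \<bar>(\<Sum>i=1..n. Y i \<omega>) / real n - \<mu>\<bar> < inverse (real (Suc k))) sequentially"
    show "(\<lambda>n. (\<Sum>i=1..n. Y i \<omega>) / real n) \<longlonglongrightarrow> expectation (Y 1)"
      unfolding \<mu>_def[symmetric]
    proof (rule tendstoI)
      fix e :: real assume "e > 0"
      then obtain k where k: "inverse (real (Suc k)) < e" using reals_Archimedean by blast
      show "eventually (\<lambda>n. dist ((\<Sum>i=1..n. Y i \<omega>) / real n) \<mu> < e) sequentially"
        using H[rule_format, of k] by (rule eventually_mono) (use k in \<open>auto simp: dist_real_def\<close>)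
    qed
  qed
qed


lemma dm1: "(t::real) > 0 \<Longrightarrow> a / t * (t / (t+1)) = a / (t+1)"
  by (simp add: field_simps)

lemma asym1: "(\<lambda>n::nat. (sqrt (real (Suc n) / ln (real (Suc n))) - sqrt (real n / ln (real n)))
     * sqrt (real (Suc n) * ln (1 + real (Suc n)))) \<longlonglongrightarrow> 1/2"
proof -
  have "((\<lambda>x::real. (sqrt((x+1)/ln(x+1)) - sqrt(x/ln x)) * sqrt((x+1) * ln(1+(x+1)))) \<longlongrightarrow> 1/2) at_top"
    by real_asymp
  from filterlim_compose[OF this filterlim_real_sequentially] show ?thesis
    by (simp add: add.commute)
qed

lemma det:
  fixes X :: "nat \<Rightarrow> 'a \<Rightarrow> real" and \<omega> :: 'a and \<mu> s \<alpha> :: real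
  assumes bnd: "\<And>i. i \<ge> 1 \<Longrightarrow> X i \<omega> \<in> {0..1}" and mu01: "\<mu> \<in> {0..1}"
    and l1: "(\<lambda>n. (\<Sum>i=1..n. X i \<omega>) / real n) \<longlonglongrightarrow> \<mu>"
    and l2: "(\<lambda>n. (\<Sum>i=1..n. (X i \<omega> - \<mu>)\<^sup>2) / real n) \<longlonglongrightarrow> s"
    and s: "s > 0" and a0: "0 < \<alpha>" and a1: "\<alpha> < 1"
  shows "(\<lambda>t::nat. (\<Sum>i=1..t. lam \<alpha> X i \<omega>) /
        (2 * sqrt (2 * ln (2 / \<alpha>) / s) * sqrt (real t / ln (real t)))) \<longlonglongrightarrow> 1"
proof -
  define m where "m t = mu_hat X t \<omega>" for t
  define sh where "sh t = sigma2_hat X t \<omega>" for t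
  have m01: "m t \<in> {0..1}" for t
  proof (cases "t = 0")
    case True then show ?thesis by (simp add: m_def mu_hat_def)
  next
    case False
    have "(\<Sum>i=1..t. X i \<omega>) \<ge> 0" by (intro sum_nonneg) (use bnd in auto)
    moreover have "(\<Sum>i=1..t. X i \<omega>) \<le> (\<Sum>i=1..t. 1)" by (intro sum_mono) (use bnd in auto)
    ultimately show ?thesis using False by (simp add: m_def mu_hat_def field_simps)
  qed
  have mlim: "m \<longlonglongrightarrow> \<mu>"
  proof -
    have h1: "(\<lambda>t::nat. (1/2) / (real t + 1)) \<longlonglongrightarrow> 0" by real_asymp
    have h2: "(\<lambda>t::nat. real t / (real t + 1)) \<longlonglongrightarrow> 1" by real_asymp
    have "(\<lambda>t. (1/2) / (real t + 1) + (\<Sum>i=1..t. X i \<omega>) / real t * (real t / (real t + 1))) \<longlonglongrightarrow> 0 + \<mu> * 1"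
      by (intro tendsto_add tendsto_mult h1 h2 l1)
    moreover have "eventually (\<lambda>t. (1/2) / (real t + 1) + (\<Sum>i=1..t. X i \<omega>) / real t * (real t / (real t + 1)) = m t) sequentially"
      using eventually_gt_at_top[of 0]
    proof (rule eventually_mono)
      fix t :: nat assume t: "t > 0"
      have e1: "(\<Sum>i=1..t. X i \<omega>) / real t * (real t / (real t + 1)) = (\<Sum>i=1..t. X i \<omega>) / (real t + 1)"
        using t by (intro dm1) simp
      show "(1/2) / (real t + 1) + (\<Sum>i=1..t. X i \<omega>) / real t * (real t / (real t + 1)) = m t"
        using t unfolding e1 by (simp add: m_def mu_hat_def add_divide_distrib)
    qed
    ultimately show ?thesis using tendsto_cong by force
  qed
  define e where "e i = (X i \<omega> - m i)\<^sup>2 - (X i \<omega> - \<mu>)\<^sup>2" for i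
  have ebnd: "\<bar>e i\<bar> \<le> 2 * \<bar>m i - \<mu>\<bar>" if "i \<ge> 1" for i
  proof -
    have eq: "e i = (\<mu> - m i) * (2 * X i \<omega> - m i - \<mu>)" by (simp add: e_def power2_eq_square algebra_simps)
    have b: "\<bar>2 * X i \<omega> - m i - \<mu>\<bar> \<le> 2" using bnd[OF that] m01[of i] mu01 by auto
    have "\<bar>e i\<bar> = \<bar>\<mu> - m i\<bar> * \<bar>2 * X i \<omega> - m i - \<mu>\<bar>" by (simp add: eq abs_mult)
    also have "\<dots> \<le> \<bar>\<mu> - m i\<bar> * 2" by (intro mult_left_mono b) simp
    finally show ?thesis by (simp add: abs_minus_commute)
  qed
  have elim: "e \<longlonglongrightarrow> 0"
  proof (rule Lim_null_comparison)
    show "eventually (\<lambda>i. norm (e i) \<le> 2 * \<bar>m i - \<mu>\<bar>) sequentially"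
      using eventually_ge_at_top[of 1] by (rule eventually_mono) (simp add: ebnd)
    have "(\<lambda>i. 2 * \<bar>m i - \<mu>\<bar>) \<longlonglongrightarrow> 2 * \<bar>\<mu> - \<mu>\<bar>" by (intro tendsto_intros mlim)
    then show "(\<lambda>i. 2 * \<bar>m i - \<mu>\<bar>) \<longlonglongrightarrow> 0" by simp
  qed
  have ecesaro: "(\<lambda>n. (\<Sum>i=1..n. e i) / real n) \<longlonglongrightarrow> 0"
  proof (rule stolz)
    show "(\<lambda>n. ((\<Sum>i=1..Suc n. e i) - (\<Sum>i=1..n. e i)) / (real (Suc n) - real n)) \<longlonglongrightarrow> 0"
      using LIMSEQ_Suc[OF elim] by simp
    show "eventually (\<lambda>n. real n < real (Suc n)) sequentially" by simp
    show "filterlim real at_top sequentially" by (rule filterlim_real_sequentially)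
  qed
  have shlim: "sh \<longlonglongrightarrow> s"
  proof -
    have h1: "(\<lambda>t::nat. (1/4) / (real t + 1)) \<longlonglongrightarrow> 0" by real_asymp
    have h2: "(\<lambda>t::nat. real t / (real t + 1)) \<longlonglongrightarrow> 1" by real_asymp
    have "(\<lambda>t. (1/4) / (real t + 1) + ((\<Sum>i=1..t. (X i \<omega> - \<mu>)\<^sup>2) / real t + (\<Sum>i=1..t. e i) / real t) * (real t / (real t + 1))) \<longlonglongrightarrow> 0 + (s + 0) * 1"
      by (intro tendsto_add tendsto_mult h1 h2 l2 ecesaro)
    moreover have "eventually (\<lambda>t. (1/4) / (real t + 1) + ((\<Sum>i=1..t. (X i \<omega> - \<mu>)\<^sup>2) / real t + (\<Sum>i=1..t. e i) / real t) * (real t / (real t + 1)) = sh t) sequentially"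
      using eventually_gt_at_top[of 0]
    proof (rule eventually_mono)
      fix t :: nat assume t: "t > 0"
      have "(\<Sum>i=1..t. (X i \<omega> - mu_hat X i \<omega>)\<^sup>2) = (\<Sum>i=1..t. (X i \<omega> - \<mu>)\<^sup>2) + (\<Sum>i=1..t. e i)"
        by (simp add: e_def m_def sum.distrib[symmetric])
      moreover have e1: "((\<Sum>i=1..t. (X i \<omega> - \<mu>)\<^sup>2) / real t + (\<Sum>i=1..t. e i) / real t) * (real t / (real t + 1))
          = ((\<Sum>i=1..t. (X i \<omega> - \<mu>)\<^sup>2) + (\<Sum>i=1..t. e i)) / (real t + 1)"
        using t unfolding add_divide_distrib[symmetric] by (intro dm1) simp
      ultimately show "(1/4) / (real t + 1) + ((\<Sum>i=1..t. (X i \<omega> - \<mu>)\<^sup>2) / real t + (\<Sum>i=1..t. e i) / real t) * (real t / (real t + 1)) = sh t"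
        using t unfolding e1 by (simp add: sh_def sigma2_hat_def add_divide_distrib)
    qed
    ultimately show ?thesis using tendsto_cong by force
  qed
  have shpos: "sh t > 0" for t
  proof (cases "t = 0")
    case True then show ?thesis by (simp add: sh_def sigma2_hat_def)
  next
    case False
    have "(\<Sum>i=1..t. (X i \<omega> - mu_hat X i \<omega>)\<^sup>2) \<ge> 0" by (intro sum_nonneg) simp
    then show ?thesis using False by (simp add: sh_def sigma2_hat_def)
  qed
  define c where "c = 2 * ln (2 / \<alpha>)"
  have c: "c > 0" using a0 a1 by (simp add: c_def)
  define K where "K = sqrt (c / s)"
  have K: "K > 0" using c s by (simp add: K_def)
  define w where "w n = sqrt (real (Suc n) * ln (1 + real (Suc n)))" for n :: nat
  have wpos: "w n > 0" for n
  proof -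
    have "ln (1 + real (Suc n)) > 0" by simp
    then show ?thesis by (simp add: w_def)
  qed
  have lamS: "lam \<alpha> X (Suc n) \<omega> = min (sqrt (c / sh n) / w n) (1/2)" for n
  proof -
    have "sqrt (c / (sh n * real (Suc n) * ln (1 + real (Suc n)))) = sqrt (c / sh n) / w n"
      by (simp add: w_def real_sqrt_divide real_sqrt_mult mult.assoc)
    then show ?thesis by (simp add: lam_def sh_def c_def)
  qed
  have winv: "(\<lambda>n. 1 / w n) \<longlonglongrightarrow> 0"
    unfolding w_def by real_asymp
  have r1: "(\<lambda>n. sqrt (c / sh n)) \<longlonglongrightarrow> K"
    unfolding K_def by (intro tendsto_intros shlim) (use s in auto)
  have rl: "(\<lambda>n. sqrt (c / sh n) * (1 / w n)) \<longlonglongrightarrow> K * 0"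
    by (intro tendsto_mult r1 winv)
  have "eventually (\<lambda>n. sqrt (c / sh n) * (1 / w n) < 1/2) sequentially"
    using order_tendstoD(2)[OF rl, of "1/2"] by simp
  then have evlam: "eventually (\<lambda>n. sqrt (c / sh n) = lam \<alpha> X (Suc n) \<omega> * w n) sequentially"
  proof (rule eventually_mono)
    fix n assume "sqrt (c / sh n) * (1 / w n) < 1/2"
    then show "sqrt (c / sh n) = lam \<alpha> X (Suc n) \<omega> * w n"
      using wpos[of n] by (simp add: lamS)
  qed
  have plim: "(\<lambda>n. lam \<alpha> X (Suc n) \<omega> * w n) \<longlonglongrightarrow> K"
    using r1 tendsto_cong[OF evlam] by simp
  define g where "g n = sqrt (real n / ln (real n))" for n :: nat
  have qlim: "(\<lambda>n. (g (Suc n) - g n) * w n) \<longlonglongrightarrow> 1/2"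
    using asym1 by (simp add: g_def w_def)
  define A where "A t = (\<Sum>i=1..t. lam \<alpha> X i \<omega>)" for t
  define G where "G t = 2 * sqrt (2 * ln (2 / \<alpha>) / s) * sqrt (real t / ln (real t))" for t :: nat
  have GK: "G t = 2 * K * g t" for t by (simp add: G_def K_def c_def g_def)
  have "(\<lambda>n. A n / G n) \<longlonglongrightarrow> 1"
  proof (rule stolz)
    have eq: "(A (Suc n) - A n) / (G (Suc n) - G n) = (lam \<alpha> X (Suc n) \<omega> * w n) / (2 * K * ((g (Suc n) - g n) * w n))" for n
    proof -
      have "A (Suc n) - A n = lam \<alpha> X (Suc n) \<omega>" by (simp add: A_def)
      moreover have "G (Suc n) - G n = 2 * K * (g (Suc n) - g n)" by (simp add: GK algebra_simps)
      moreover have "2 * K * ((g (Suc n) - g n) * w n) = (2 * K * (g (Suc n) - g n)) * w n" by (simp add: mult.assoc)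
      ultimately show ?thesis using wpos[of n] by simp
    qed
    have "(\<lambda>n. (lam \<alpha> X (Suc n) \<omega> * w n) / (2 * K * ((g (Suc n) - g n) * w n))) \<longlonglongrightarrow> K / (2 * K * (1/2))"
      by (intro tendsto_divide tendsto_mult tendsto_const plim qlim) (use K in simp)
    then show "(\<lambda>n. (A (Suc n) - A n) / (G (Suc n) - G n)) \<longlonglongrightarrow> 1"
      using K by (simp add: eq)
    have "eventually (\<lambda>n. (g (Suc n) - g n) * w n > 0) sequentially"
      using order_tendstoD(1)[OF qlim, of 0] by simp
    then show "eventually (\<lambda>n. G n < G (Suc n)) sequentially"
    proof (rule eventually_mono)
      fix n assume "(g (Suc n) - g n) * w n > 0"
      then have "g (Suc n) - g n > 0" using wpos[of n] by (simp add: zero_less_mult_iff)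
      then show "G n < G (Suc n)" using K by (simp add: GK)
    qed
    have "filterlim g at_top sequentially" unfolding g_def by real_asymp
    then have "filterlim (\<lambda>n. 2 * K * g n) at_top sequentially"
      by (intro filterlim_tendsto_pos_mult_at_top[OF tendsto_const]) (use K in simp)
    moreover have "G = (\<lambda>n. 2 * K * g n)" by (rule ext) (simp add: GK)
    ultimately show "filterlim G at_top sequentially" by simp
  qed
  then show ?thesis by (simp add: A_def G_def)
qed


theorem mainTheorem15:
  fixes M :: "'a measure" and X :: "nat \<Rightarrow> 'a \<Rightarrow> real" and \<alpha> \<sigma>2 :: real
  assumes "prob_space M"
    and "\<And>i. i \<ge> 1 \<Longrightarrow> X i \<in> borel_measurable M"
    and "prob_space.indep_vars M (\<lambda>_. borel) X {1..}"
    and "\<And>i. i \<ge> 1 \<Longrightarrow> distr M borel (X i) = distr M borel (X 1)"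
    and "\<And>i \<omega>. i \<ge> 1 \<Longrightarrow> \<omega> \<in> space M \<Longrightarrow> X i \<omega> \<in> {0..1}"
    and "integral\<^sup>L M (\<lambda>\<omega>. (X 1 \<omega> - integral\<^sup>L M (X 1))\<^sup>2) = \<sigma>2"
    and "\<sigma>2 > 0"
    and "0 < \<alpha>" and "\<alpha> < 1"
  shows "AE \<omega> in M.
    ((\<lambda>t::nat. (\<Sum>i=1..t. lam \<alpha> X i \<omega>) /
        (2 * sqrt (2 * ln (2 / \<alpha>) / \<sigma>2) * sqrt (real t / ln (real t))))
      \<longlongrightarrow> 1) at_top"
proof -
  interpret prob_space M by (rule assms(1))
  define \<mu> where "\<mu> = expectation (X 1)"
  have X1m: "X 1 \<in> borel_measurable M" using assms(2) by simp
  have int1: "integrable M (X 1)"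
    by (rule integrable_const_bound[where B=1]) (use assms(5) X1m in \<open>auto intro!: AE_I2\<close>)
  have mu0: "0 \<le> \<mu>" unfolding \<mu>_def
    by (rule integral_nonneg_AE) (use assms(5) in \<open>auto intro!: AE_I2\<close>)
  have "expectation (X 1) \<le> expectation (\<lambda>_. 1)"
    by (intro integral_mono int1) (use assms(5) in auto)
  then have mu1: "\<mu> \<le> 1" by (simp add: \<mu>_def prob_space)
  have l1: "AE \<omega> in M. (\<lambda>n. (\<Sum>i=1..n. X i \<omega>) / real n) \<longlonglongrightarrow> \<mu>"
    unfolding \<mu>_def by (rule slln01[OF assms(2) assms(3) assms(4) assms(5)])
  define f where "f x = (x - \<mu>)\<^sup>2" for x :: real
  have fm: "f \<in> borel_measurable borel" unfolding f_def by measurable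
  define Z where "Z i \<omega> = f (X i \<omega>)" for i \<omega>
  have Zeq: "Z i = (\<lambda>\<omega>. f (X i \<omega>))" for i by (rule ext) (simp add: Z_def)
  have measZ: "Z i \<in> borel_measurable M" if "i \<ge> 1" for i
    unfolding Z_def using measurable_comp[OF assms(2)[OF that] fm] by (simp add: comp_def)
  have indZ: "indep_vars (\<lambda>_. borel) Z {1..}"
    unfolding Z_def by (rule indep_vars_compose2[OF assms(3)]) (rule fm)
  have dZ: "distr M borel (Z i) = distr (distr M borel (X i)) borel f" if "i \<ge> 1" for i
  proof -
    have "Z i = (\<lambda>x. f (X i x))" by (rule ext) (simp add: Z_def)
    then show ?thesis using distr_distr[OF fm assms(2)[OF that]] by (simp add: comp_def)
  qed
  have distZ: "distr M borel (Z i) = distr M borel (Z 1)" if "i \<ge> 1" for i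
    using dZ[OF that] dZ[of 1] assms(4)[OF that] by simp
  have bndZ: "Z i \<omega> \<in> {0..1}" if "i \<ge> 1" "\<omega> \<in> space M" for i \<omega>
  proof -
    have x: "X i \<omega> \<in> {0..1}" using assms(5)[OF that] .
    have a: "\<bar>X i \<omega> - \<mu>\<bar> \<le> 1" using x mu0 mu1 by auto
    have "(X i \<omega> - \<mu>)\<^sup>2 = \<bar>X i \<omega> - \<mu>\<bar>\<^sup>2" by simp
    also have "\<dots> \<le> 1" by (rule power_le_one) (use a in auto)
    finally show ?thesis by (simp add: Z_def f_def)
  qed
  have l2: "AE \<omega> in M. (\<lambda>n. (\<Sum>i=1..n. Z i \<omega>) / real n) \<longlonglongrightarrow> expectation (Z 1)"
    by (rule slln01[OF measZ indZ distZ bndZ])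
  have EZ: "expectation (Z 1) = \<sigma>2"
    using assms(6) by (simp add: Zeq f_def \<mu>_def)
  have "AE \<omega> in M. \<omega> \<in> space M" by (rule AE_space)
  with l1 l2 show ?thesis
  proof eventually_elim
    case (elim \<omega>)
    show ?case
    proof (rule det[of X \<omega> \<mu> \<sigma>2 \<alpha>])
      show "\<And>i. i \<ge> 1 \<Longrightarrow> X i \<omega> \<in> {0..1}" using assms(5) elim(3) by blast
      show "\<mu> \<in> {0..1}" using mu0 mu1 by simp
      show "(\<lambda>n. (\<Sum>i=1..n. X i \<omega>) / real n) \<longlonglongrightarrow> \<mu>" by (rule elim(1))
      show "(\<lambda>n. (\<Sum>i=1..n. (X i \<omega> - \<mu>)\<^sup>2) / real n) \<longlonglongrightarrow> \<sigma>2"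
        using elim(2)[unfolded EZ] by (simp add: Z_def f_def)
    qed (use assms(7,8,9) in auto)
  qed
qed

end
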